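(* Let $I$ be a nonempty set and let $\mathcal{M}_I$ be the Banach algebra whose underlying Banach space is $\ell^1(I\times I)$ with product $(ab)(i,j)=\sum_{k\in I}a(i,k)b(k,j)$ for $a,b\in\mathcal{M}_I$, $i,j\in I$. Regard $\ell^1(I)$ as a Banach $\mathcal{M}_I$-bimodule via $(a\cdot b)(i)=\sum_{k\in I}a(i,k)b(k)$ and $(b\cdot a)(i)=\sum_{k\in I}b(k)a(k,i)$ for $a\in\mathcal{M}_I$, $b\in\ell^1(I)$, $i\in I$. Then the map $\nu:\ell^1(I)\hat{\otimes}_{\mathcal{M}_I}\ell^1(I)\to\mathbb{C}$ determined by $\nu(a\otimes b)=\sum_{i\in I}a(i)b(i)$ is a well-defined isomorphism of Banach spaces (the first factor being regarded as a right and the second as a left $\mathcal{M}_I$-module).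
   Context: $\hat{\otimes}$ denotes the completed projective tensor product of Banach spaces. For a Banach algebra $A$, a right Banach $A$-module $E$ and a left Banach $A$-module $F$, the module tensor product $E\hat{\otimes}_A F$ is the quotient Banach space $(E\hat{\otimes}F)/N$, where $N$ is the closed linear span of $\{x\cdot a\otimes y-x\otimes a\cdot y: x\in E,\ y\in F,\ a\in A\}$. *)

theory Defs
  imports "HOL-Analysis.Analysis"
begin

text \<open>The index set I is modelled by an arbitrary type 'i (types are nonempty).
  l^1 over a type: absolutely summable complex functions.\<close>

definition l1 :: "('i \<Rightarrow> complex) set" where
  "l1 = {f. (\<lambda>i. norm (f i)) summable_on UNIV}"

definition l1norm :: "('i \<Rightarrow> complex) \<Rightarrow> real" where
  "l1norm f = (\<Sum>\<^sub>\<infinity>i. norm (f i))"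

text \<open>M_I = l^1(I x I) (i.e. l1 at type 'i x 'i); its actions on l^1(I).\<close>

definition mat_mult :: "('i \<times> 'i \<Rightarrow> complex) \<Rightarrow> ('i \<times> 'i \<Rightarrow> complex) \<Rightarrow> ('i \<times> 'i \<Rightarrow> complex)" where
  "mat_mult a b = (\<lambda>(i, j). \<Sum>\<^sub>\<infinity>k. a (i, k) * b (k, j))"

definition mact_left :: "('i \<times> 'i \<Rightarrow> complex) \<Rightarrow> ('i \<Rightarrow> complex) \<Rightarrow> ('i \<Rightarrow> complex)" where
  "mact_left a b = (\<lambda>i. \<Sum>\<^sub>\<infinity>k. a (i, k) * b k)"

definition mact_right :: "('i \<Rightarrow> complex) \<Rightarrow> ('i \<times> 'i \<Rightarrow> complex) \<Rightarrow> ('i \<Rightarrow> complex)" where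
  "mact_right b a = (\<lambda>i. \<Sum>\<^sub>\<infinity>k. b k * a (k, i))"

definition bbil :: "(('i \<Rightarrow> complex) \<Rightarrow> ('i \<Rightarrow> complex) \<Rightarrow> complex) \<Rightarrow> bool" where
  "bbil B \<longleftrightarrow>
     (\<forall>x\<in>l1. \<forall>x'\<in>l1. \<forall>y\<in>l1. \<forall>c. B (\<lambda>i. x i + c * x' i) y = B x y + c * B x' y) \<and>
     (\<forall>x\<in>l1. \<forall>y\<in>l1. \<forall>y'\<in>l1. \<forall>c. B x (\<lambda>i. y i + c * y' i) = B x y + c * B x y') \<and>
     (\<exists>K. \<forall>x\<in>l1. \<forall>y\<in>l1. norm (B x y) \<le> K * l1norm x * l1norm y)"

text \<open>Completed projective tensor product l^1(I) \<hat>\<otimes> l^1(I): every element is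
  u = \<Sum>n x_n \<otimes> y_n with \<Sum>n \<parallel>x_n\<parallel>\<parallel>y_n\<parallel> < \<infinity>; such a representation is a sequence of pairs.
  Two representations denote the same element iff they agree on all bounded bilinear
  forms (the dual of E \<hat>\<otimes> F); the projective norm is the infimum over representations.\<close>

type_synonym 'i rep = "nat \<Rightarrow> ('i \<Rightarrow> complex) \<times> ('i \<Rightarrow> complex)"

definition reps :: "'i rep set" where
  "reps = {r. (\<forall>n. fst (r n) \<in> l1 \<and> snd (r n) \<in> l1) \<and>
              summable (\<lambda>n. l1norm (fst (r n)) * l1norm (snd (r n)))}"

definition rep_eq :: "'i rep \<Rightarrow> 'i rep \<Rightarrow> bool" where
  "rep_eq r s \<longleftrightarrow> (\<forall>B. bbil B \<longrightarrow>
     (\<Sum>n. B (fst (r n)) (snd (r n))) = (\<Sum>n. B (fst (s n)) (snd (s n))))"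

definition pnorm :: "'i rep \<Rightarrow> real" where
  "pnorm r = Inf {(\<Sum>n. l1norm (fst (s n)) * l1norm (snd (s n))) | s. s \<in> reps \<and> rep_eq s r}"

definition rep_add :: "'i rep \<Rightarrow> 'i rep \<Rightarrow> 'i rep" where
  "rep_add r s = (\<lambda>n. if even n then r (n div 2) else s (n div 2))"

definition rep_scale :: "complex \<Rightarrow> 'i rep \<Rightarrow> 'i rep" where
  "rep_scale c r = (\<lambda>n. ((\<lambda>i. c * fst (r n) i), snd (r n)))"

definition rep_diff :: "'i rep \<Rightarrow> 'i rep \<Rightarrow> 'i rep" where
  "rep_diff r s = rep_add r (rep_scale (-1) s)"

definition rep_fin :: "(('i \<Rightarrow> complex) \<times> ('i \<Rightarrow> complex)) list \<Rightarrow> 'i rep" where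
  "rep_fin xs = (\<lambda>n. if n < length xs then xs ! n else ((\<lambda>_. 0), (\<lambda>_. 0)))"

text \<open>Linear span of {x\<cdot>a \<otimes> y - x \<otimes> a\<cdot>y}: finite combinations
  \<Sum>k c_k (x_k\<cdot>a_k \<otimes> y_k - x_k \<otimes> a_k\<cdot>y_k).\<close>

definition bal_term :: "complex \<times> ('i \<Rightarrow> complex) \<times> ('i \<times> 'i \<Rightarrow> complex) \<times> ('i \<Rightarrow> complex)
    \<Rightarrow> (('i \<Rightarrow> complex) \<times> ('i \<Rightarrow> complex)) list" where
  "bal_term t = (case t of (c, x, a, y) \<Rightarrow>
     [((\<lambda>i. c * mact_right x a i), y), ((\<lambda>i. - c * x i), mact_left a y)])"

definition bal_span :: "'i rep set" where
  "bal_span = {rep_fin (concat (map bal_term ts)) | ts.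
                 \<forall>(c, x, a, y) \<in> set ts. x \<in> l1 \<and> a \<in> l1 \<and> y \<in> l1}"

text \<open>N = closed linear span (closure w.r.t. the projective norm).\<close>

definition modN :: "'i rep \<Rightarrow> bool" where
  "modN r \<longleftrightarrow> r \<in> reps \<and> (\<forall>\<epsilon>>0. \<exists>s\<in>bal_span. pnorm (rep_diff r s) < \<epsilon>)"

text \<open>Quotient norm on l^1(I) \<hat>\<otimes>_{M_I} l^1(I) = (l^1 \<hat>\<otimes> l^1)/N; the class of r is
  the same as that of s iff modN (rep_diff r s).\<close>

definition qnorm :: "'i rep \<Rightarrow> real" where
  "qnorm r = Inf {pnorm (rep_diff r s) | s. s \<in> reps \<and> modN s}"

definition nu :: "'i rep \<Rightarrow> complex" where
  "nu r = (\<Sum>n. \<Sum>\<^sub>\<infinity>i. fst (r n) i * snd (r n) i)"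

end

theory Submission
  imports Defs
begin

lemma has_sum_single': "((\<lambda>i. if i = j then (c::'b::{comm_monoid_add,t2_space}) else 0) has_sum c) UNIV"
proof -
  have "((\<lambda>i. if i = j then c else 0) has_sum (sum (\<lambda>i. if i = j then c else 0) {j})) {j}"
    by (rule has_sum_finite) simp
  then have "((\<lambda>i. if i = j then c else 0) has_sum c) {j}" by simp
  then show ?thesis
    by (rule has_sum_cong_neutral[THEN iffD1, rotated -1]) auto
qed

lemma sums_interleave:
  fixes f g :: "nat \<Rightarrow> 'a::real_normed_vector"
  assumes "f sums a" "g sums b"
  shows "(\<lambda>n. if even n then f (n div 2) else g (n div 2)) sums (a + b)"
proof -
  have 1: "(\<lambda>n. if even n then f (n div 2) else 0) sums a"
    using assms(1)
    by (subst sums_mono_reindex[of "\<lambda>n. 2 * n", symmetric])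
       (auto simp: strict_mono_def elim!: evenE)
  have 2: "(\<lambda>n. if even n then 0 else g (n div 2)) sums b"
    using assms(2)
    by (subst sums_mono_reindex[of "\<lambda>n. 2 * n + 1", symmetric])
       (auto simp: strict_mono_def elim!: oddE)
  have "(\<lambda>n. (if even n then f (n div 2) else 0) + (if even n then 0 else g (n div 2))) sums (a + b)"
    by (rule sums_add[OF 1 2])
  then show ?thesis by (simp add: if_distrib cong: if_cong)
qed

lemma cmp_abs:
  fixes f :: "'a \<Rightarrow> 'b::real_normed_vector"
  assumes "g summable_on A" "\<And>x. x \<in> A \<Longrightarrow> norm (f x) \<le> g x"
  shows "(\<lambda>x. norm (f x)) summable_on A"
proof -
  have g: "(\<lambda>x. norm (g x)) summable_on A" using assms(1) summable_on_iff_abs_summable_on_real by blast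
  have "\<And>x. x \<in> A \<Longrightarrow> norm (f x) \<le> norm (g x)" using assms(2)
    by (smt (verit) norm_ge_zero real_norm_def)
  then show ?thesis using Infinite_Sum.abs_summable_on_comparison_test[of g A f] g by blast
qed

lemma l1_iff: "x \<in> l1 \<longleftrightarrow> (\<lambda>i. norm (x i)) summable_on UNIV" by (simp add: l1_def)

lemma l1norm_nonneg: "l1norm x \<ge> 0" unfolding l1norm_def by (rule infsum_nonneg) simp

lemma l1_zero[simp]: "(\<lambda>i. 0) \<in> l1" by (simp add: l1_def)

lemma l1_scale: "x \<in> l1 \<Longrightarrow> (\<lambda>i. c * x i) \<in> l1"
  unfolding l1_def by (simp add: norm_mult summable_on_cmult_right)

lemma l1norm_scale: "l1norm (\<lambda>i. c * x i) = norm c * l1norm x"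
  unfolding l1norm_def by (simp add: norm_mult infsum_cmult_right')

lemma l1_add: "x \<in> l1 \<Longrightarrow> y \<in> l1 \<Longrightarrow> (\<lambda>i. x i + c * y i) \<in> l1"
  unfolding l1_iff
proof (rule cmp_abs[where g="\<lambda>i. norm (x i) + norm c * norm (y i)"])
  assume a: "(\<lambda>i. norm (x i)) summable_on UNIV" "(\<lambda>i. norm (y i)) summable_on UNIV"
  have "(\<lambda>i. norm c * norm (y i)) summable_on UNIV" using a(2) by (rule summable_on_cmult_right)
  then show "(\<lambda>i. norm (x i) + norm c * norm (y i)) summable_on UNIV"
    using a(1) summable_on_add by blast
  fix i show "norm (x i + c * y i) \<le> norm (x i) + norm c * norm (y i)"
    by (metis norm_mult norm_triangle_ineq)
qed

definition e0 :: "'i \<Rightarrow> complex" where "e0 = (\<lambda>i. if i = undefined then 1 else 0)"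

lemma norm_e0: "(\<lambda>i. norm (e0 i)) = (\<lambda>i. if i = undefined then 1 else 0)"
  by (auto simp: e0_def)

lemma single_summable: "(\<lambda>i. if i = j then (c::'b::{comm_monoid_add,t2_space}) else 0) summable_on UNIV"
  using has_sum_single'[of j c] unfolding summable_on_def by blast

lemma single_infsum: "(\<Sum>\<^sub>\<infinity>i. if i = j then (c::'b::{comm_monoid_add,t2_space}) else 0) = c"
  by (rule infsumI) (rule has_sum_single')

lemma e0_l1: "e0 \<in> l1"
  unfolding l1_def mem_Collect_eq norm_e0 by (rule single_summable)

lemma l1norm_e0: "l1norm e0 = 1"
  unfolding l1norm_def norm_e0 by (rule single_infsum)

lemma norm_le_l1norm: "x \<in> l1 \<Longrightarrow> norm (x j) \<le> l1norm x"
proof -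
  assume x: "x \<in> l1"
  have "norm (x j) = (\<Sum>\<^sub>\<infinity>i. (if i = j then norm (x j) else 0))"
    by (rule single_infsum[symmetric])
  also have "\<dots> \<le> l1norm x" unfolding l1norm_def
  proof (rule infsum_mono[OF single_summable])
    show "(\<lambda>i. norm (x i)) summable_on UNIV" using x by (simp add: l1_def)
  qed simp
  finally show ?thesis .
qed

lemma prod_abs_summable:
  assumes "x \<in> l1" "y \<in> l1"
  shows "(\<lambda>i. norm (x i * y i)) summable_on UNIV"
proof (rule cmp_abs[where g="\<lambda>i. l1norm y * norm (x i)"])
  show "(\<lambda>i. l1norm y * norm (x i)) summable_on UNIV"
    using assms(1) by (intro summable_on_cmult_right) (simp add: l1_def)
  fix i show "norm (x i * y i) \<le> l1norm y * norm (x i)"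
    using norm_le_l1norm[OF assms(2), of i] by (simp add: norm_mult) (metis mult.commute mult_left_mono norm_ge_zero)
qed

lemma bbil_lin1: "bbil B \<Longrightarrow> x \<in> l1 \<Longrightarrow> x' \<in> l1 \<Longrightarrow> y \<in> l1 \<Longrightarrow>
   B (\<lambda>i. x i + c * x' i) y = B x y + c * B x' y"
  by (simp add: bbil_def)

lemma bbil_lin2: "bbil B \<Longrightarrow> x \<in> l1 \<Longrightarrow> y \<in> l1 \<Longrightarrow> y' \<in> l1 \<Longrightarrow>
   B x (\<lambda>i. y i + c * y' i) = B x y + c * B x y'"
  by (simp add: bbil_def)

lemma bbil_zero1: "bbil B \<Longrightarrow> y \<in> l1 \<Longrightarrow> B (\<lambda>i. 0) y = 0"
  using bbil_lin1[of B "\<lambda>i. 0" "\<lambda>i. 0" y 1] by simp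

lemma bbil_zero2: "bbil B \<Longrightarrow> x \<in> l1 \<Longrightarrow> B x (\<lambda>i. 0) = 0"
  using bbil_lin2[of B x "\<lambda>i. 0" "\<lambda>i. 0" 1] by simp

lemma bbil_scale1: "bbil B \<Longrightarrow> x \<in> l1 \<Longrightarrow> y \<in> l1 \<Longrightarrow> B (\<lambda>i. c * x i) y = c * B x y"
  using bbil_lin1[of B "\<lambda>i. 0" x y c] bbil_zero1[of B y] by simp

lemma bbil_scale2: "bbil B \<Longrightarrow> x \<in> l1 \<Longrightarrow> y \<in> l1 \<Longrightarrow> B x (\<lambda>i. c * y i) = c * B x y"
  using bbil_lin2[of B x "\<lambda>i. 0" y c] bbil_zero2[of B x] by simp

lemma bbil_bound:
  fixes B :: "('i \<Rightarrow> complex) \<Rightarrow> ('i \<Rightarrow> complex) \<Rightarrow> complex"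
  assumes "bbil B"
  shows "\<exists>K\<ge>0. \<forall>x\<in>l1. \<forall>y\<in>l1. norm (B x y) \<le> K * (l1norm x * l1norm y)"
proof -
  obtain K where K: "\<forall>x\<in>l1. \<forall>y\<in>l1. norm (B x y) \<le> K * l1norm x * l1norm y"
    using assms unfolding bbil_def by blast
  have "\<forall>x\<in>l1. \<forall>y\<in>l1. norm (B x y) \<le> max K 0 * (l1norm x * l1norm y)"
  proof (intro ballI)
    fix x y :: "'i \<Rightarrow> complex" assume "x \<in> l1" "y \<in> l1"
    then have "norm (B x y) \<le> K * (l1norm x * l1norm y)" using K by (simp add: mult.assoc)
    also have "\<dots> \<le> max K 0 * (l1norm x * l1norm y)"
      by (intro mult_right_mono) (auto simp: l1norm_nonneg)
    finally show "norm (B x y) \<le> max K 0 * (l1norm x * l1norm y)" .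
  qed
  then show ?thesis by (intro exI[of _ "max K 0"]) auto
qed

definition SB :: "(('i \<Rightarrow> complex) \<Rightarrow> ('i \<Rightarrow> complex) \<Rightarrow> complex) \<Rightarrow> 'i rep \<Rightarrow> complex" where
  "SB B r = (\<Sum>n. B (fst (r n)) (snd (r n)))"

definition rnorm :: "'i rep \<Rightarrow> real" where
  "rnorm r = (\<Sum>n. l1norm (fst (r n)) * l1norm (snd (r n)))"

lemma rep_eq_SB: "rep_eq r s \<longleftrightarrow> (\<forall>B. bbil B \<longrightarrow> SB B r = SB B s)"
  by (simp add: rep_eq_def SB_def)

lemma repsD: "r \<in> reps \<Longrightarrow> fst (r n) \<in> l1" "r \<in> reps \<Longrightarrow> snd (r n) \<in> l1"
  "r \<in> reps \<Longrightarrow> summable (\<lambda>n. l1norm (fst (r n)) * l1norm (snd (r n)))"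
  by (auto simp: reps_def)

lemma SB_summable:
  assumes "bbil B" "r \<in> reps"
  shows "summable (\<lambda>n. norm (B (fst (r n)) (snd (r n))))"
proof -
  obtain K where K: "K \<ge> 0" "\<forall>x\<in>l1. \<forall>y\<in>l1. norm (B x y) \<le> K * (l1norm x * l1norm y)"
    using bbil_bound[OF assms(1)] by blast
  show ?thesis
  proof (rule summable_comparison_test)
    show "summable (\<lambda>n. K * (l1norm (fst (r n)) * l1norm (snd (r n))))"
      using repsD(3)[OF assms(2)] by (rule summable_mult)
    show "\<exists>N. \<forall>n\<ge>N. norm (norm (B (fst (r n)) (snd (r n)))) \<le> K * (l1norm (fst (r n)) * l1norm (snd (r n)))"
    proof (intro exI allI impI)
      fix n
      have "norm (B (fst (r n)) (snd (r n))) \<le> K * (l1norm (fst (r n)) * l1norm (snd (r n)))"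
        using K(2) repsD(1,2)[OF assms(2)] by blast
      then show "norm (norm (B (fst (r n)) (snd (r n)))) \<le> K * (l1norm (fst (r n)) * l1norm (snd (r n)))"
        by simp
    qed
  qed
qed

lemma SB_sums: "bbil B \<Longrightarrow> r \<in> reps \<Longrightarrow> (\<lambda>n. B (fst (r n)) (snd (r n))) sums SB B r"
  unfolding SB_def by (rule summable_sums, rule summable_norm_cancel, rule SB_summable)

lemma reps_add_scale:
  assumes r: "r \<in> reps" and s: "s \<in> reps"
  shows "rep_add r (rep_scale c s) \<in> reps"
proof -
  have "(\<lambda>n. if even n then l1norm (fst (r (n div 2))) * l1norm (snd (r (n div 2)))
            else norm c * (l1norm (fst (s (n div 2))) * l1norm (snd (s (n div 2))))) sums
        (rnorm r + norm c * rnorm s)"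
    unfolding rnorm_def
    by (intro sums_interleave summable_sums repsD(3)[OF r] sums_mult repsD(3)[OF s])
  then have "summable (\<lambda>n. l1norm (fst (rep_add r (rep_scale c s) n)) * l1norm (snd (rep_add r (rep_scale c s) n)))"
    by (auto simp: rep_add_def rep_scale_def l1norm_scale sums_summable if_distrib mult.assoc cong: if_cong)
  moreover have "fst (rep_add r (rep_scale c s) n) \<in> l1 \<and> snd (rep_add r (rep_scale c s) n) \<in> l1" for n
    using repsD(1,2)[OF r] repsD(1,2)[OF s] by (auto simp: rep_add_def rep_scale_def l1_scale)
  ultimately show ?thesis by (simp add: reps_def)
qed

lemma reps_diff: "r \<in> reps \<Longrightarrow> s \<in> reps \<Longrightarrow> rep_diff r s \<in> reps"
  unfolding rep_diff_def by (rule reps_add_scale)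

lemma SB_add_scale:
  assumes B: "bbil B" and r: "r \<in> reps" and s: "s \<in> reps"
  shows "SB B (rep_add r (rep_scale c s)) = SB B r + c * SB B s"
proof -
  have "(\<lambda>n. if even n then B (fst (r (n div 2))) (snd (r (n div 2)))
            else c * B (fst (s (n div 2))) (snd (s (n div 2)))) sums (SB B r + c * SB B s)"
    by (intro sums_interleave SB_sums B r sums_mult s)
  moreover have "(\<lambda>n. B (fst (rep_add r (rep_scale c s) n)) (snd (rep_add r (rep_scale c s) n))) =
    (\<lambda>n. if even n then B (fst (r (n div 2))) (snd (r (n div 2)))
            else c * B (fst (s (n div 2))) (snd (s (n div 2))))"
    using repsD(1,2)[OF s] by (auto simp: rep_add_def rep_scale_def bbil_scale1[OF B])
  ultimately show ?thesis unfolding SB_def by (simp add: sums_iff)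
qed

lemma SB_diff: "bbil B \<Longrightarrow> r \<in> reps \<Longrightarrow> s \<in> reps \<Longrightarrow> SB B (rep_diff r s) = SB B r - SB B s"
  unfolding rep_diff_def by (simp add: SB_add_scale)

definition B0 :: "('i \<Rightarrow> complex) \<Rightarrow> ('i \<Rightarrow> complex) \<Rightarrow> complex" where
  "B0 x y = (\<Sum>\<^sub>\<infinity>i. x i * y i)"

lemma nu_SB: "nu r = SB B0 r" by (simp add: nu_def SB_def B0_def)

lemma prod_summable: "x \<in> l1 \<Longrightarrow> y \<in> l1 \<Longrightarrow> (\<lambda>i. x i * y i) summable_on UNIV"
  by (rule abs_summable_summable) (rule prod_abs_summable)

lemma B0_bound: "x \<in> l1 \<Longrightarrow> y \<in> l1 \<Longrightarrow> norm (B0 x y) \<le> l1norm x * l1norm y"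
proof -
  assume x: "x \<in> l1" and y: "y \<in> l1"
  have "norm (B0 x y) \<le> (\<Sum>\<^sub>\<infinity>i. norm (x i * y i))"
    unfolding B0_def by (rule norm_infsum_bound) (rule prod_abs_summable[OF x y])
  also have "\<dots> \<le> (\<Sum>\<^sub>\<infinity>i. l1norm y * norm (x i))"
    using prod_abs_summable[OF x y] x norm_le_l1norm[OF y]
    by (intro infsum_mono)
       (auto simp: l1_def norm_mult intro!: summable_on_cmult_right, metis mult.commute mult_left_mono norm_ge_zero)
  also have "\<dots> = l1norm y * l1norm x"
    by (simp add: infsum_cmult_right' l1norm_def)
  finally show ?thesis by (simp add: mult.commute)
qed

lemma B0_bbil: "bbil (B0 :: ('i \<Rightarrow> complex) \<Rightarrow> ('i \<Rightarrow> complex) \<Rightarrow> complex)"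
  unfolding bbil_def
proof (intro conjI ballI allI)
  fix x x' y :: "'i \<Rightarrow> complex" and c assume "x \<in> l1" "x' \<in> l1" "y \<in> l1"
  then show "B0 (\<lambda>i. x i + c * x' i) y = B0 x y + c * B0 x' y"
  proof -
    have e: "(\<lambda>i. (x i + c * x' i) * y i) = (\<lambda>i. x i * y i + c * (x' i * y i))"
      by (simp add: algebra_simps)
    show ?thesis unfolding B0_def e
      by (subst infsum_add) (auto intro!: prod_summable summable_on_cmult_right simp: infsum_cmult_right' \<open>x \<in> l1\<close> \<open>x' \<in> l1\<close> \<open>y \<in> l1\<close>)
  qed
next
  fix x y y' :: "'i \<Rightarrow> complex" and c assume "x \<in> l1" "y \<in> l1" "y' \<in> l1"
  then show "B0 x (\<lambda>i. y i + c * y' i) = B0 x y + c * B0 x y'"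
  proof -
    have e: "(\<lambda>i. x i * (y i + c * y' i)) = (\<lambda>i. x i * y i + c * (x i * y' i))"
      by (simp add: algebra_simps)
    show ?thesis unfolding B0_def e
      by (subst infsum_add) (auto intro!: prod_summable summable_on_cmult_right simp: infsum_cmult_right' \<open>x \<in> l1\<close> \<open>y' \<in> l1\<close> \<open>y \<in> l1\<close>)
  qed
next
  show "\<exists>K. \<forall>x\<in>l1. \<forall>y\<in>l1. norm (B0 x y) \<le> K * l1norm x * l1norm y"
    by (intro exI[of _ 1]) (simp add: B0_bound)
qed

lemma rnorm_nonneg: "r \<in> reps \<Longrightarrow> 0 \<le> rnorm r"
  unfolding rnorm_def by (rule suminf_nonneg) (auto simp: l1norm_nonneg repsD)

lemma pnorm_le: "t \<in> reps \<Longrightarrow> rep_eq t v \<Longrightarrow> pnorm v \<le> rnorm t"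
  unfolding pnorm_def
  by (rule cInf_lower) (auto simp: rnorm_def[symmetric] intro!: bdd_belowI[of _ 0] rnorm_nonneg)

lemma rep_eq_refl: "rep_eq v v" by (simp add: rep_eq_def)

lemma pnorm_ge: "v \<in> reps \<Longrightarrow> (\<And>s. s \<in> reps \<Longrightarrow> rep_eq s v \<Longrightarrow> P \<le> rnorm s) \<Longrightarrow> P \<le> pnorm v"
  unfolding pnorm_def
  by (rule cInf_greatest) (auto simp: rnorm_def[symmetric] intro: rep_eq_refl)

lemma norm_nu_le_rnorm: "s \<in> reps \<Longrightarrow> norm (nu s) \<le> rnorm s"
proof -
  assume s: "s \<in> reps"
  have sm: "summable (\<lambda>n. norm (B0 (fst (s n)) (snd (s n))))" by (rule SB_summable[OF B0_bbil s])
  have "norm (nu s) \<le> (\<Sum>n. norm (B0 (fst (s n)) (snd (s n))))"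
    unfolding nu_SB SB_def by (rule summable_norm[OF sm])
  also have "\<dots> \<le> rnorm s" unfolding rnorm_def
    by (rule suminf_le[OF _ sm repsD(3)[OF s]]) (simp add: B0_bound repsD(1,2)[OF s])
  finally show ?thesis .
qed

lemma norm_nu_le_pnorm: "v \<in> reps \<Longrightarrow> norm (nu v) \<le> pnorm v"
proof (rule pnorm_ge)
  fix s assume "s \<in> reps" "rep_eq s v"
  then have "nu v = nu s" by (simp add: rep_eq_SB nu_SB B0_bbil)
  then show "norm (nu v) \<le> rnorm s" using norm_nu_le_rnorm[OF \<open>s \<in> reps\<close>] by simp
qed

lemma mat_abs: "a \<in> l1 \<Longrightarrow> (\<lambda>(i,k). norm (a (i,k))) summable_on UNIV \<times> UNIV"
  by (simp add: l1_def split_beta')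

lemma row_summable: "a \<in> l1 \<Longrightarrow> (\<lambda>i. \<Sum>\<^sub>\<infinity>k. norm (a (i,k))) summable_on UNIV"
proof -
  assume "a \<in> l1"
  then have "(\<lambda>(i,k). norm (a (i,k))) summable_on Sigma UNIV (\<lambda>_. UNIV)" by (rule mat_abs)
  from summable_on_Sigma_banach[OF this] show ?thesis by simp
qed

lemma row_l1:
  assumes "a \<in> l1" shows "(\<lambda>k. a (i,k)) \<in> l1"
proof -
  have "(\<lambda>p. norm (a p)) summable_on UNIV" using assms by (simp add: l1_def)
  then have "(\<lambda>p. norm (a p)) summable_on range (Pair i)"
    by (rule summable_on_subset_banach) auto
  then show ?thesis
    by (subst (asm) summable_on_reindex) (auto simp: l1_def o_def inj_on_def)
qed

lemma swap_l1:
  assumes "a \<in> l1" shows "(\<lambda>p. a (prod.swap p)) \<in> l1"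
proof -
  have "(\<lambda>p. norm (a p)) summable_on (prod.swap ` UNIV)"
    using assms by (simp add: l1_def)
  then show ?thesis
    by (subst (asm) summable_on_reindex) (auto simp: l1_def o_def)
qed

lemma mact_left_B0: "mact_left a y i = B0 (\<lambda>k. a (i,k)) y"
  by (simp add: mact_left_def B0_def)

lemma mact_right_B0: "mact_right x a i = B0 x (\<lambda>k. a (k,i))"
  by (simp add: mact_right_def B0_def)

lemma mact_left_l1:
  assumes a: "a \<in> l1" and y: "y \<in> l1"
  shows "mact_left a y \<in> l1"
  unfolding l1_iff
proof (rule cmp_abs[where g="\<lambda>i. l1norm (\<lambda>k. a (i,k)) * l1norm y"])
  show "(\<lambda>i. l1norm (\<lambda>k. a (i,k)) * l1norm y) summable_on UNIV"
    unfolding l1norm_def by (rule summable_on_cmult_left) (rule row_summable[OF a])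
  fix i show "norm (mact_left a y i) \<le> l1norm (\<lambda>k. a (i,k)) * l1norm y"
    unfolding mact_left_B0 by (rule B0_bound[OF row_l1[OF a] y])
qed

lemma mact_right_l1:
  assumes x: "x \<in> l1" and a: "a \<in> l1"
  shows "mact_right x a \<in> l1"
  unfolding l1_iff
proof (rule cmp_abs[where g="\<lambda>i. l1norm x * l1norm (\<lambda>k. a (k,i))"])
  have "(\<lambda>i. l1norm (\<lambda>k. (\<lambda>p. a (prod.swap p)) (i,k))) summable_on UNIV"
    unfolding l1norm_def by (rule row_summable[OF swap_l1[OF a]])
  then show "(\<lambda>i. l1norm x * l1norm (\<lambda>k. a (k,i))) summable_on UNIV"
    by (intro summable_on_cmult_right) simp
  fix i show "norm (mact_right x a i) \<le> l1norm x * l1norm (\<lambda>k. a (k,i))"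
    unfolding mact_right_B0 by (rule B0_bound[OF x]) (simp add: row_l1[OF swap_l1[OF a], simplified])
qed

lemma fubini_mact:
  assumes x: "x \<in> l1" and a: "a \<in> l1" and y: "y \<in> l1"
  shows "(\<Sum>\<^sub>\<infinity>i. mact_right x a i * y i) = (\<Sum>\<^sub>\<infinity>k. x k * mact_left a y k)"
proof -
  have ab: "(\<lambda>p. norm ((\<lambda>(k,i). x k * a (k,i) * y i) p)) summable_on UNIV \<times> UNIV"
  proof (rule cmp_abs[where g="\<lambda>(k,i). (l1norm x * l1norm y) * norm (a (k,i))"])
    show "(\<lambda>(k,i). (l1norm x * l1norm y) * norm (a (k,i))) summable_on UNIV \<times> UNIV"
      using summable_on_cmult_right[OF mat_abs[OF a], of "l1norm x * l1norm y"]
      by (simp add: split_beta')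
    fix p :: "'a \<times> 'a"
    obtain k i where p: "p = (k,i)" by (cases p)
    have "norm (x k) * norm (a (k,i)) * norm (y i) \<le> l1norm x * norm (a (k,i)) * l1norm y"
      by (intro mult_mono norm_le_l1norm x y) (auto intro: mult_nonneg_nonneg l1norm_nonneg)
    then show "norm ((\<lambda>(k,i). x k * a (k,i) * y i) p) \<le> (\<lambda>(k,i). (l1norm x * l1norm y) * norm (a (k,i))) p"
      by (simp add: p norm_mult mult_ac)
  qed
  have sm: "(\<lambda>(k,i). x k * a (k,i) * y i) summable_on UNIV \<times> UNIV"
    by (rule abs_summable_summable) (use ab in simp)
  have sw: "(\<Sum>\<^sub>\<infinity>k. \<Sum>\<^sub>\<infinity>i. x k * a (k,i) * y i) = (\<Sum>\<^sub>\<infinity>i. \<Sum>\<^sub>\<infinity>k. x k * a (k,i) * y i)"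
    using infsum_swap_banach[of "\<lambda>k i. x k * a (k,i) * y i" UNIV UNIV] sm by simp
  have l: "mact_right x a i * y i = (\<Sum>\<^sub>\<infinity>k. x k * a (k,i) * y i)" for i
    unfolding mact_right_def by (simp add: infsum_cmult_left')
  have r: "x k * mact_left a y k = (\<Sum>\<^sub>\<infinity>i. x k * a (k,i) * y i)" for k
    unfolding mact_left_def by (simp add: infsum_cmult_right' mult.assoc)
  show ?thesis unfolding l r using sw by simp
qed

lemma SB_rep_fin:
  assumes "bbil B"
  shows "SB B (rep_fin xs) = sum_list (map (\<lambda>p. B (fst p) (snd p)) xs)"
proof -
  have "SB B (rep_fin xs) = (\<Sum>n\<in>{..<length xs}. B (fst (rep_fin xs n)) (snd (rep_fin xs n)))"
    unfolding SB_def
    by (rule suminf_finite) (auto simp: rep_fin_def bbil_zero1[OF assms])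
  also have "\<dots> = (\<Sum>n\<in>{0..<length xs}. (map (\<lambda>p. B (fst p) (snd p)) xs) ! n)"
    by (intro sum.cong) (auto simp: rep_fin_def)
  also have "\<dots> = sum_list (map (\<lambda>p. B (fst p) (snd p)) xs)"
    by (simp add: sum_list_sum_nth)
  finally show ?thesis .
qed

lemma rep_fin_reps: "(\<forall>p\<in>set xs. fst p \<in> l1 \<and> snd p \<in> l1) \<Longrightarrow> rep_fin xs \<in> reps"
  unfolding reps_def
  by (auto simp: rep_fin_def l1norm_def split: if_splits intro!: summable_finite[of "{..<length xs}"])

lemma bal_term_l1:
  assumes "x \<in> l1" "a \<in> l1" "y \<in> l1"
  shows "\<forall>p\<in>set (bal_term (c, x, a, y)). fst p \<in> l1 \<and> snd p \<in> l1"
  using assms l1_scale[of x "-c"] by (simp add: bal_term_def l1_scale mact_left_l1 mact_right_l1)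

lemma bal_span_reps: "b \<in> bal_span \<Longrightarrow> b \<in> reps"
proof -
  assume "b \<in> bal_span"
  then obtain ts where b: "b = rep_fin (concat (map bal_term ts))"
    and ts: "\<forall>(c, x, a, y) \<in> set ts. x \<in> l1 \<and> a \<in> l1 \<and> y \<in> l1"
    unfolding bal_span_def by blast
  have "\<forall>p\<in>set (concat (map bal_term ts)). fst p \<in> l1 \<and> snd p \<in> l1"
  proof
    fix p assume "p \<in> set (concat (map bal_term ts))"
    then obtain t where t: "t \<in> set ts" "p \<in> set (bal_term t)" by auto
    obtain c x a y where tt: "t = (c, x, a, y)" by (cases t)
    show "fst p \<in> l1 \<and> snd p \<in> l1" using bal_term_l1[of x a y c] ts t tt by auto
  qed
  then show ?thesis unfolding b by (rule rep_fin_reps)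
qed

lemma nu_bal_term:
  assumes "x \<in> l1" "a \<in> l1" "y \<in> l1"
  shows "sum_list (map (\<lambda>p. B0 (fst p) (snd p)) (bal_term (c, x, a, y))) = 0"
proof -
  have "B0 (\<lambda>i. c * mact_right x a i) y = c * B0 (mact_right x a) y"
    by (rule bbil_scale1[OF B0_bbil]) (use assms in \<open>simp_all add: mact_right_l1\<close>)
  moreover have "B0 (\<lambda>i. - c * x i) (mact_left a y) = - c * B0 x (mact_left a y)"
    by (rule bbil_scale1[OF B0_bbil]) (use assms in \<open>simp_all add: mact_left_l1\<close>)
  moreover have "B0 (mact_right x a) y = B0 x (mact_left a y)"
    unfolding B0_def by (rule fubini_mact[OF assms])
  ultimately show ?thesis by (simp add: bal_term_def)
qed

lemma SB_concat:
  "SB B (rep_fin (concat (map bal_term ts))) = sum_list (map (\<lambda>t. sum_list (map (\<lambda>p. B (fst p) (snd p)) (bal_term t))) ts)"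
  if "bbil B" for B
  unfolding SB_rep_fin[OF that] by (induct ts) auto

lemma nu_bal_span: "b \<in> bal_span \<Longrightarrow> nu b = 0"
proof -
  assume "b \<in> bal_span"
  then obtain ts where b: "b = rep_fin (concat (map bal_term ts))"
    and ts: "\<forall>(c, x, a, y) \<in> set ts. x \<in> l1 \<and> a \<in> l1 \<and> y \<in> l1"
    unfolding bal_span_def by blast
  have "nu b = sum_list (map (\<lambda>t. sum_list (map (\<lambda>p. B0 (fst p) (snd p)) (bal_term t))) ts)"
    unfolding nu_SB b by (rule SB_concat[OF B0_bbil])
  also have "\<dots> = 0" using ts
    by (induct ts) (auto simp: nu_bal_term)
  finally show ?thesis .
qed

lemma l1norm_zero[simp]: "l1norm (\<lambda>_. 0) = 0" by (simp add: l1norm_def)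

lemma B0_e0: "B0 (e0::'i \<Rightarrow> complex) e0 = 1"
proof -
  have "(\<lambda>i::'i. e0 i * e0 i) = (\<lambda>i. if i = undefined then (1::complex) else 0)"
    by (auto simp: e0_def)
  then show ?thesis unfolding B0_def by (simp add: single_infsum)
qed

definition single :: "complex \<Rightarrow> 'i rep" where
  "single c = (\<lambda>n. if n = 0 then ((\<lambda>i. c * e0 i), e0) else ((\<lambda>_. 0), (\<lambda>_. 0)))"

lemma single_reps: "single c \<in> reps"
  unfolding reps_def single_def
  by (auto simp: e0_l1 l1_scale split: if_splits intro!: summable_finite[of "{0}"])

lemma SB_single: "bbil B \<Longrightarrow> SB B (single c) = c * B e0 e0"
proof -
  assume B: "bbil B"
  have "SB B (single c) = (\<Sum>n\<in>{0}. B (fst (single c n)) (snd (single c n)))"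
    unfolding SB_def by (rule suminf_finite) (auto simp: single_def bbil_zero1[OF B])
  also have "\<dots> = c * B e0 e0" by (simp add: single_def bbil_scale1[OF B] e0_l1)
  finally show ?thesis .
qed

lemma rnorm_single: "rnorm (single c :: 'i rep) = norm c"
proof -
  have "rnorm (single c :: 'i rep) = (\<Sum>n\<in>{0}. l1norm (fst ((single c :: 'i rep) n)) * l1norm (snd ((single c :: 'i rep) n)))"
    unfolding rnorm_def by (rule suminf_finite) (auto simp: single_def)
  also have "\<dots> = norm c" by (simp add: single_def l1norm_scale l1norm_e0)
  finally show ?thesis .
qed

lemma nu_single: "nu (single c) = c"
  by (simp add: nu_SB SB_single B0_bbil B0_e0)

lemma modN_nu:
  assumes w: "w \<in> reps" and m: "modN w"
  shows "nu w = 0"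
proof (rule ccontr)
  assume "nu w \<noteq> 0"
  then have "norm (nu w) > 0" by simp
  then obtain b where b: "b \<in> bal_span" "pnorm (rep_diff w b) < norm (nu w)"
    using m unfolding modN_def by blast
  have br: "b \<in> reps" by (rule bal_span_reps[OF b(1)])
  have "nu (rep_diff w b) = nu w - nu b"
    unfolding nu_SB by (rule SB_diff[OF B0_bbil w br])
  then have "nu (rep_diff w b) = nu w" using nu_bal_span[OF b(1)] by simp
  moreover have "norm (nu (rep_diff w b)) \<le> pnorm (rep_diff w b)"
    by (rule norm_nu_le_pnorm[OF reps_diff[OF w br]])
  ultimately show False using b(2) by simp
qed

lemma rowmat_l1:
  assumes x: "x \<in> l1"
  shows "(\<lambda>(k,i). if k = j then x i else 0) \<in> l1"
proof -
  let ?F = "\<lambda>p. norm ((\<lambda>(k,i). if k = j then x i else (0::complex)) p)"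
  have "?F summable_on range (Pair j)"
    using x by (subst summable_on_reindex) (auto simp: inj_on_def o_def l1_def)
  moreover have "?F summable_on range (Pair j) \<longleftrightarrow> ?F summable_on UNIV"
    by (rule summable_on_cong_neutral) auto
  ultimately show ?thesis by (simp add: l1_def)
qed

lemma mact_right_e0:
  fixes x :: "'i \<Rightarrow> complex"
  shows "mact_right e0 (\<lambda>(k,i). if k = undefined then x i else 0) = x"
proof
  fix i
  have "(\<lambda>k::'i. e0 k * (\<lambda>(k,i). if k = undefined then x i else 0) (k, i)) = (\<lambda>k. if k = undefined then x i else 0)"
    by (auto simp: e0_def)
  then show "mact_right e0 (\<lambda>(k,i). if k = undefined then x i else 0) i = x i"
    unfolding mact_right_def by (simp add: single_infsum)
qed

lemma mact_left_e0: "mact_left (\<lambda>(k,i). if k = undefined then x i else 0) y = (\<lambda>i. B0 x y * e0 i)"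
proof
  fix i show "mact_left (\<lambda>(k,i). if k = undefined then x i else 0) y i = B0 x y * e0 i"
    by (cases "i = undefined") (simp_all add: mact_left_def B0_def e0_def)
qed

lemma nu_zero_modN:
  fixes w :: "'i rep"
  assumes w: "w \<in> reps" and nu0: "nu w = 0"
  shows "modN w"
  unfolding modN_def
proof (intro conjI allI impI w)
  fix \<epsilon> :: real assume \<epsilon>: "\<epsilon> > 0"
  define x where "x = (\<lambda>n. fst (w n))"
  define y where "y = (\<lambda>n. snd (w n))"
  define g where "g = (\<lambda>n. B0 (x n) (y n))"
  define h where "h = (\<lambda>n. l1norm (x n) * l1norm (y n))"
  have xl: "x n \<in> l1" and yl: "y n \<in> l1" for n using repsD[OF w] by (auto simp: x_def y_def)
  have hs: "summable h" using repsD(3)[OF w] by (simp add: h_def x_def y_def)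
  have "g sums 0" using SB_sums[OF B0_bbil w] nu0 by (simp add: g_def x_def y_def nu_SB)
  then have "(\<lambda>n. sum g {..<n}) \<longlonglongrightarrow> 0" by (simp add: sums_def)
  from LIMSEQ_D[OF this, of "\<epsilon>/2"] \<epsilon> obtain N1 where N1: "\<forall>n\<ge>N1. norm (sum g {..<n}) < \<epsilon>/2" by auto
  from suminf_exist_split[of "\<epsilon>/2" h] \<epsilon> hs obtain N2 where N2: "\<forall>n\<ge>N2. norm (\<Sum>i. h (i + n)) < \<epsilon>/2" by auto
  define N where "N = max N1 N2"
  define c where "c = sum g {..<N}"
  define a where "a = (\<lambda>n. (\<lambda>(k::'i,i). if k = undefined then x n i else (0::complex)))"
  define ts where "ts = map (\<lambda>n. (1::complex, e0::'i \<Rightarrow> complex, a n, y n)) [0..<N]"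
  define b where "b = rep_fin (concat (map bal_term ts))"
  define t where "t = (\<lambda>n::nat. if n = 0 then ((\<lambda>i. c * e0 i), e0) else w (n - 1 + N))"
  have al: "a n \<in> l1" for n unfolding a_def by (rule rowmat_l1[OF xl])
  have bb: "b \<in> bal_span" unfolding bal_span_def b_def
  proof (intro CollectI exI conjI)
    show "\<forall>(c, x, a, y) \<in> set ts. x \<in> l1 \<and> a \<in> l1 \<and> y \<in> l1"
      using al yl e0_l1 by (auto simp: ts_def)
  qed (rule refl)
  have br: "b \<in> reps" by (rule bal_span_reps[OF bb])
  have tsm: "summable (\<lambda>n. l1norm (fst (t n)) * l1norm (snd (t n)))"
  proof -
    have "summable (\<lambda>n. h (n + N))" by (rule summable_ignore_initial_segment[OF hs])
    then have "summable (\<lambda>n. l1norm (fst (t (Suc n))) * l1norm (snd (t (Suc n))))"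
      by (simp add: t_def h_def x_def y_def)
    then show ?thesis using summable_Suc_iff[of "\<lambda>n. l1norm (fst (t n)) * l1norm (snd (t n))"] by simp
  qed
  have tr: "t \<in> reps" unfolding reps_def
    using tsm xl yl e0_l1 by (auto simp: t_def x_def y_def l1_scale)
  have rt: "rnorm t = norm c + (\<Sum>n. h (n + N))"
  proof -
    have "(\<Sum>n. l1norm (fst (t (Suc n))) * l1norm (snd (t (Suc n)))) = rnorm t - norm c"
      unfolding rnorm_def by (subst suminf_split_head[OF tsm]) (simp add: t_def l1norm_scale l1norm_e0)
    moreover have "(\<Sum>n. l1norm (fst (t (Suc n))) * l1norm (snd (t (Suc n)))) = (\<Sum>n. h (n + N))"
      by (simp add: t_def h_def x_def y_def)
    ultimately show ?thesis by simp
  qed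
  have "norm c < \<epsilon>/2" using N1 by (simp add: c_def N_def)
  moreover have "(\<Sum>n. h (n + N)) < \<epsilon>/2"
  proof -
    have "N \<ge> N2" by (simp add: N_def)
    then have "norm (\<Sum>n. h (n + N)) < \<epsilon>/2" using N2 by blast
    moreover have "(\<Sum>n. h (n + N)) \<le> norm (\<Sum>n. h (n + N))" by simp
    ultimately show ?thesis by linarith
  qed
  ultimately have rte: "rnorm t < \<epsilon>" using rt by simp
  have "rep_eq t (rep_diff w b)"
    unfolding rep_eq_SB
  proof (intro allI impI)
    fix B :: "('i \<Rightarrow> complex) \<Rightarrow> ('i \<Rightarrow> complex) \<Rightarrow> complex" assume B: "bbil B"
    define G where "G = (\<lambda>n. B (x n) (y n))"
    have Gs: "summable G" using SB_sums[OF B w] by (auto simp: G_def x_def y_def sums_summable)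
    have SBw: "SB B w = suminf G" by (simp add: SB_def G_def x_def y_def)
    have termeq: "sum_list (map (\<lambda>p. B (fst p) (snd p)) (bal_term (1, e0, a n, y n))) = G n - g n * B e0 e0" for n
    proof -
      have "B (\<lambda>i. - 1 * e0 i) (\<lambda>i. g n * e0 i) = - 1 * B e0 (\<lambda>i. g n * e0 i)"
        by (rule bbil_scale1[OF B e0_l1 l1_scale[OF e0_l1]])
      also have "\<dots> = - (g n * B e0 e0)" by (simp add: bbil_scale2[OF B e0_l1 e0_l1])
      finally have "B (\<lambda>i. - 1 * e0 i) (\<lambda>i. g n * e0 i) = - (g n * B e0 e0)" .
      then show ?thesis
        by (simp add: bal_term_def a_def mact_right_e0 mact_left_e0 G_def g_def)
    qed
    have "SB B b = sum_list (map (\<lambda>n. G n - g n * B e0 e0) [0..<N])"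
      unfolding b_def SB_concat[OF B] ts_def by (simp add: o_def termeq)
    also have "\<dots> = (\<Sum>n<N. G n) - c * B e0 e0"
      by (simp add: sum_set_upt_conv_sum_list_nat[symmetric] atLeast0LessThan sum_subtractf c_def sum_distrib_right)
    finally have SBb: "SB B b = (\<Sum>n<N. G n) - c * B e0 e0" .
    have Ts: "summable (\<lambda>n. B (fst (t n)) (snd (t n)))" using SB_sums[OF B tr] sums_summable by blast
    have "(\<Sum>n. B (fst (t (Suc n))) (snd (t (Suc n)))) = SB B t - B (\<lambda>i. c * e0 i) e0"
      unfolding SB_def by (subst suminf_split_head[OF Ts]) (simp add: t_def)
    moreover have "(\<Sum>n. B (fst (t (Suc n))) (snd (t (Suc n)))) = (\<Sum>n. G (n + N))"
      by (simp add: t_def G_def x_def y_def)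
    moreover have "suminf G = (\<Sum>n. G (n + N)) + (\<Sum>n<N. G n)"
      by (rule suminf_split_initial_segment[OF Gs])
    moreover have "B (\<lambda>i. c * e0 i) e0 = c * B e0 e0" by (rule bbil_scale1[OF B e0_l1 e0_l1])
    ultimately have "SB B t = suminf G - (\<Sum>n<N. G n) + c * B e0 e0" by simp
    also have "\<dots> = SB B (rep_diff w b)"
      by (simp add: SB_diff[OF B w br] SBb SBw)
    finally show "SB B t = SB B (rep_diff w b)" .
  qed
  then have "pnorm (rep_diff w b) \<le> rnorm t" by (rule pnorm_le[OF tr])
  then show "\<exists>s\<in>bal_span. pnorm (rep_diff w s) < \<epsilon>" using bb rte by force
qed

lemma nu_diff: "r \<in> reps \<Longrightarrow> s \<in> reps \<Longrightarrow> nu (rep_diff r s) = nu r - nu s"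
  unfolding nu_SB by (rule SB_diff[OF B0_bbil])

lemma conj1:
  assumes r: "r \<in> reps" and s: "s \<in> reps"
  shows "modN (rep_diff r s) \<longleftrightarrow> nu r = nu s"
proof
  assume "modN (rep_diff r s)"
  then have "nu (rep_diff r s) = 0" by (rule modN_nu[OF reps_diff[OF r s]])
  then show "nu r = nu s" using nu_diff[OF r s] by simp
next
  assume "nu r = nu s"
  then have "nu (rep_diff r s) = 0" using nu_diff[OF r s] by simp
  then show "modN (rep_diff r s)" by (rule nu_zero_modN[OF reps_diff[OF r s]])
qed

lemma pnorm_nonneg: "v \<in> reps \<Longrightarrow> 0 \<le> pnorm v"
  by (rule pnorm_ge) (auto intro: rnorm_nonneg)

theorem lemma1:
  shows "(\<forall>r\<in>(reps :: 'i rep set). \<forall>s\<in>reps. modN (rep_diff r s) \<longleftrightarrow> nu r = nu s) \<and>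
         (\<forall>r\<in>(reps :: 'i rep set). \<forall>s\<in>reps. \<forall>c.
             nu (rep_add r (rep_scale c s)) = nu r + c * nu s) \<and>
         (\<exists>C>0. \<forall>r\<in>(reps :: 'i rep set). norm (nu r) \<le> C * qnorm r) \<and>
         (\<exists>C>0. \<forall>r\<in>(reps :: 'i rep set). qnorm r \<le> C * norm (nu r)) \<and>
         (\<forall>z. \<exists>r\<in>(reps :: 'i rep set). nu r = z)"
proof (intro conjI)
  show "\<forall>r\<in>(reps :: 'i rep set). \<forall>s\<in>reps. modN (rep_diff r s) \<longleftrightarrow> nu r = nu s"
  proof (intro ballI)
    fix r s :: "'i rep" assume "r \<in> reps" "s \<in> reps"
    then show "modN (rep_diff r s) \<longleftrightarrow> nu r = nu s" by (rule conj1)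
  qed
  show "\<forall>r\<in>(reps :: 'i rep set). \<forall>s\<in>reps. \<forall>c. nu (rep_add r (rep_scale c s)) = nu r + c * nu s"
  proof (intro ballI allI)
    fix r s :: "'i rep" and c assume "r \<in> reps" "s \<in> reps"
    then show "nu (rep_add r (rep_scale c s)) = nu r + c * nu s"
      unfolding nu_SB by (rule SB_add_scale[OF B0_bbil])
  qed
  show "\<exists>C>0. \<forall>r\<in>(reps :: 'i rep set). norm (nu r) \<le> C * qnorm r"
  proof (intro exI[of _ 1] conjI ballI)
    fix r :: "'i rep" assume r: "r \<in> reps"
    have "norm (nu r) \<le> qnorm r"
      unfolding qnorm_def
    proof (rule cInf_greatest)
      have "modN (rep_diff r r)" using conj1[OF r r] by simp
      then show "{pnorm (rep_diff r s) |s. s \<in> reps \<and> modN s} \<noteq> {}"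
        using reps_diff[OF r r] by blast
    next
      fix p assume "p \<in> {pnorm (rep_diff r s) |s. s \<in> reps \<and> modN s}"
      then obtain s where s: "s \<in> reps" "modN s" "p = pnorm (rep_diff r s)" by blast
      have "nu (rep_diff r s) = nu r" using nu_diff[OF r s(1)] modN_nu[OF s(1,2)] by simp
      then show "norm (nu r) \<le> p" using norm_nu_le_pnorm[OF reps_diff[OF r s(1)]] s(3) by simp
    qed
    then show "norm (nu r) \<le> 1 * qnorm r" by simp
  qed simp
  show "\<exists>C>0. \<forall>r\<in>(reps :: 'i rep set). qnorm r \<le> C * norm (nu r)"
  proof (intro exI[of _ 1] conjI ballI)
    fix r :: "'i rep" assume r: "r \<in> reps"
    define t where "t = (single (nu r) :: 'i rep)"
    have tr: "t \<in> reps" by (simp add: t_def single_reps)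
    define s where "s = rep_diff r t"
    have sr: "s \<in> reps" unfolding s_def by (rule reps_diff[OF r tr])
    have ms: "modN s" unfolding s_def using conj1[OF r tr] by (simp add: t_def nu_single)
    have "qnorm r \<le> pnorm (rep_diff r s)"
      unfolding qnorm_def
    proof (rule cInf_lower)
      show "pnorm (rep_diff r s) \<in> {pnorm (rep_diff r s) |s. s \<in> reps \<and> modN s}"
        using sr ms by blast
      show "bdd_below {pnorm (rep_diff r s) |s. s \<in> reps \<and> modN s}"
        by (rule bdd_belowI[of _ 0]) (auto intro!: pnorm_nonneg reps_diff r)
    qed
    also have "pnorm (rep_diff r s) \<le> rnorm t"
    proof (rule pnorm_le[OF tr])
      show "rep_eq t (rep_diff r s)"
        unfolding rep_eq_SB s_def
      proof (intro allI impI)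
        fix B :: "('i \<Rightarrow> complex) \<Rightarrow> ('i \<Rightarrow> complex) \<Rightarrow> complex" assume B: "bbil B"
        show "SB B t = SB B (rep_diff r (rep_diff r t))"
          by (simp add: SB_diff[OF B r reps_diff[OF r tr]] SB_diff[OF B r tr])
      qed
    qed
    also have "rnorm t = norm (nu r)" by (simp add: t_def rnorm_single)
    finally show "qnorm r \<le> 1 * norm (nu r)" by simp
  qed simp
  show "\<forall>z. \<exists>r\<in>(reps :: 'i rep set). nu r = z"
  proof
    fix z show "\<exists>r\<in>(reps :: 'i rep set). nu r = z"
      using single_reps[of z] nu_single[of z] by blast
  qed
qed

end
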